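(* Let $G$ be a graph and let $v$ be a cut vertex of $G$ which decomposes $G$ into $G_1=G(V_1)$ and $H=G(U)$. If $H$ is a tree, then for every divisor $f$ on $G$ we have $\rho_G(f)=\rho_{G_1}(f_{G/H})$.
   Context: Graphs are finite, undirected, connected, loopless, possibly with multiple edges; $G(W)$ denotes the subgraph induced by $W\subseteq V(G)$. A vertex $v$ is a cut vertex if removing it disconnects $G$; it decomposes $G$ into $G_1=G(V_1)$ and $H=G(U)$ if $V(G)=V_1\cup U$, $V_1\cap U=\{v\}$, both induced subgraphs are connected, and no edge joins $V_1\setminus\{v\}$ to $U\setminus\{v\}$. For a divisor $f$ on $G$ (a function $V(G)\to\mathbb{Z}$), the contraction $f_{G/H}$ is the divisor on $G_1$ with $f_{G/H}(u)=f(u)$ for $u\in V_1\setminus\{v\}$ and $f_{G/H}(v)=\sum_{u\in U}f(u)$. Degree: $\deg(f)=\sum f(v)$. Laplacian $\Delta_G$: $\Delta_G(u,u)=\deg(u)$, $\Delta_G(u,w)=-e(u,w)$ (number of edges) for $u\ne w$. $f\sim g$ if $g=f+x\Delta_G$ for some $x\in\mathbb{Z}^{V(G)}$. Effective: all values $\ge0$; L-effective: linearly equivalent to an effective divisor. The rank $\rho_G(f)$ is $-1$ if $f$ is not L-effective, and otherwise the largest integer $r\ge0$ such that $f-\lambda$ is L-effective for every effective $\lambda$ of degree $r$ on $G$. $\rho_{G_1}$ is the rank computed in the graph $G_1$. *)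

theory Defs
  imports Main
begin

text \<open>A (multi)graph is a finite nonempty vertex set V together with an edge-multiplicity
  function e (number of edges between two vertices): symmetric, loopless, supported on V.\<close>

definition is_graph :: "'a set \<Rightarrow> ('a \<Rightarrow> 'a \<Rightarrow> nat) \<Rightarrow> bool" where
  "is_graph V e \<longleftrightarrow> finite V \<and> V \<noteq> {} \<and> (\<forall>u w. e u w = e w u) \<and> (\<forall>u. e u u = 0)
     \<and> (\<forall>u w. 0 < e u w \<longrightarrow> u \<in> V \<and> w \<in> V)"

definition induced :: "('a \<Rightarrow> 'a \<Rightarrow> nat) \<Rightarrow> 'a set \<Rightarrow> 'a \<Rightarrow> 'a \<Rightarrow> nat" where
  "induced e W = (\<lambda>u w. if u \<in> W \<and> w \<in> W then e u w else 0)"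

definition connected_on :: "'a set \<Rightarrow> ('a \<Rightarrow> 'a \<Rightarrow> nat) \<Rightarrow> bool" where
  "connected_on W e \<longleftrightarrow> W \<noteq> {} \<and>
     (\<forall>u\<in>W. \<forall>w\<in>W. (\<lambda>a b. a \<in> W \<and> b \<in> W \<and> 0 < e a b)\<^sup>*\<^sup>* u w)"

definition cut_vertex :: "'a set \<Rightarrow> ('a \<Rightarrow> 'a \<Rightarrow> nat) \<Rightarrow> 'a \<Rightarrow> bool" where
  "cut_vertex V e v \<longleftrightarrow> v \<in> V \<and> \<not> connected_on (V - {v}) e"

definition decomposes :: "'a set \<Rightarrow> ('a \<Rightarrow> 'a \<Rightarrow> nat) \<Rightarrow> 'a \<Rightarrow> 'a set \<Rightarrow> 'a set \<Rightarrow> bool" where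
  "decomposes V e v V1 U \<longleftrightarrow> V = V1 \<union> U \<and> V1 \<inter> U = {v} \<and>
     connected_on V1 e \<and> connected_on U e \<and>
     (\<forall>a\<in>V1 - {v}. \<forall>b\<in>U - {v}. e a b = 0)"

text \<open>G(U) is a tree: connected with |U| - 1 edges (counted with multiplicity).\<close>
definition is_tree_on :: "'a set \<Rightarrow> ('a \<Rightarrow> 'a \<Rightarrow> nat) \<Rightarrow> bool" where
  "is_tree_on U e \<longleftrightarrow> connected_on U e \<and>
     (\<Sum>u\<in>U. \<Sum>w\<in>U. e u w) = 2 * (card U - 1)"

definition vdeg :: "'a set \<Rightarrow> ('a \<Rightarrow> 'a \<Rightarrow> nat) \<Rightarrow> 'a \<Rightarrow> int" where
  "vdeg V e u = (\<Sum>w\<in>V. int (e u w))"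

definition laplacian :: "'a set \<Rightarrow> ('a \<Rightarrow> 'a \<Rightarrow> nat) \<Rightarrow> 'a \<Rightarrow> 'a \<Rightarrow> int" where
  "laplacian V e u w = (if u = w then vdeg V e u else - int (e u w))"

definition lin_equiv :: "'a set \<Rightarrow> ('a \<Rightarrow> 'a \<Rightarrow> nat) \<Rightarrow> ('a \<Rightarrow> int) \<Rightarrow> ('a \<Rightarrow> int) \<Rightarrow> bool" where
  "lin_equiv V e f g \<longleftrightarrow> (\<exists>x :: 'a \<Rightarrow> int. \<forall>u\<in>V. g u = f u + (\<Sum>w\<in>V. x w * laplacian V e w u))"

definition effective :: "'a set \<Rightarrow> ('a \<Rightarrow> int) \<Rightarrow> bool" where
  "effective V f \<longleftrightarrow> (\<forall>u\<in>V. 0 \<le> f u)"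

definition L_effective :: "'a set \<Rightarrow> ('a \<Rightarrow> 'a \<Rightarrow> nat) \<Rightarrow> ('a \<Rightarrow> int) \<Rightarrow> bool" where
  "L_effective V e f \<longleftrightarrow> (\<exists>g. lin_equiv V e f g \<and> effective V g)"

definition div_degree :: "'a set \<Rightarrow> ('a \<Rightarrow> int) \<Rightarrow> int" where
  "div_degree V f = (\<Sum>u\<in>V. f u)"

definition div_rank :: "'a set \<Rightarrow> ('a \<Rightarrow> 'a \<Rightarrow> nat) \<Rightarrow> ('a \<Rightarrow> int) \<Rightarrow> int" where
  "div_rank V e f = (if \<not> L_effective V e f then -1 else
     int (GREATEST r :: nat. \<forall>D. effective V D \<and> div_degree V D = int r
            \<longrightarrow> L_effective V e (\<lambda>u. f u - D u)))"

text \<open>Contraction f_{G/H} on G1 = G(V1), where H = G(U) is glued at v.\<close>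
definition contract :: "'a set \<Rightarrow> 'a \<Rightarrow> ('a \<Rightarrow> int) \<Rightarrow> 'a \<Rightarrow> int" where
  "contract U v f = (\<lambda>u. if u = v then (\<Sum>w\<in>U. f w) else f u)"

end

theory Submission
  imports Defs
begin


lemma lap_alt:
  assumes "e w w = 0"
  shows "laplacian V e w u = (if u = w then vdeg V e w else 0) - int (e w u)"
  using assms by (auto simp: laplacian_def)

lemma conn_deg_pos:
  assumes "connected_on U e" "u \<in> U" "w \<in> U" "u \<noteq> w" "finite U"
  shows "0 < (\<Sum>z\<in>U. e u z)"
proof -
  have "(\<lambda>a b. a \<in> U \<and> b \<in> U \<and> 0 < e a b)\<^sup>*\<^sup>* u w"
    using assms unfolding connected_on_def by blast
  then obtain z where "z \<in> U" "0 < e u z"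
    using assms(4) by (cases rule: converse_rtranclpE) auto
  then show ?thesis using assms(5)
    by (metis gr_zeroI sum_eq_0_iff)
qed

lemma leaf_exists:
  assumes "connected_on U e" "v \<in> U" "finite U" "2 \<le> card U"
    and tot: "(\<Sum>u\<in>U. \<Sum>w\<in>U. e u w) = 2 * (card U - 1)"
  shows "\<exists>l\<in>U - {v}. (\<Sum>z\<in>U. e l z) = 1"
proof (rule ccontr)
  assume na: "\<not> ?thesis"
  have pos: "\<And>u. u \<in> U \<Longrightarrow> 0 < (\<Sum>z\<in>U. e u z)"
  proof -
    fix u assume u: "u \<in> U"
    have "\<exists>w\<in>U. w \<noteq> u"
    proof (rule ccontr)
      assume "\<not> (\<exists>w\<in>U. w \<noteq> u)"
      then have "U \<subseteq> {u}" by auto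
      then have "card U \<le> 1" using card_mono[of "{u}" U] by auto
      then show False using assms(4) by simp
    qed
    then show "0 < (\<Sum>z\<in>U. e u z)" using conn_deg_pos assms u by metis
  qed
  have ge: "\<And>u. u \<in> U \<Longrightarrow> (if u = v then 1 else 2) \<le> (\<Sum>z\<in>U. e u z)"
  proof -
    fix u assume u: "u \<in> U"
    show "(if u = v then 1 else 2) \<le> (\<Sum>z\<in>U. e u z)"
    proof (cases "u = v")
      case True then show ?thesis using pos[OF u] by simp
    next
      case False
      then have "(\<Sum>z\<in>U. e u z) \<noteq> 1" using na u by blast
      then show ?thesis using pos[OF u] False by simp
    qed
  qed
  have "(\<Sum>u\<in>U. (if u = v then 1 else 2::nat)) \<le> (\<Sum>u\<in>U. \<Sum>z\<in>U. e u z)"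
    by (rule sum_mono) (rule ge)
  moreover have "(\<Sum>u\<in>U. (if u = v then 1 else 2::nat)) = 1 + 2 * (card U - 1)"
  proof -
    have "(\<Sum>u\<in>U. (if u = v then 1 else 2::nat)) = 1 + (\<Sum>u\<in>U-{v}. (if u = v then 1 else 2::nat))"
      using sum.remove[OF assms(3) assms(2), of "\<lambda>u. (if u = v then 1 else 2::nat)"] by simp
    also have "(\<Sum>u\<in>U-{v}. (if u = v then 1 else 2::nat)) = (\<Sum>u\<in>U-{v}. 2)"
      by (rule sum.cong) auto
    also have "\<dots> = 2 * (card U - 1)" using assms(2,3) by simp
    finally show ?thesis .
  qed
  ultimately show False using tot by simp
qed



lemma leaf_remove_conn:
  assumes conn: "connected_on U e" and l: "l \<in> U" and sym: "\<forall>a b. e a b = e b a"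
    and lp: "\<forall>a. e a a = 0" and p: "p \<in> U" "0 < e l p" and only: "\<forall>z\<in>U. z \<noteq> p \<longrightarrow> e l z = 0"
  shows "connected_on (U - {l}) e"
proof -
  let ?R = "\<lambda>a b. a \<in> U \<and> b \<in> U \<and> 0 < e a b"
  let ?R' = "\<lambda>a b. a \<in> U - {l} \<and> b \<in> U - {l} \<and> 0 < e a b"
  have pl: "p \<noteq> l" using p lp by auto
  have key: "?R\<^sup>*\<^sup>* a b \<Longrightarrow> a \<in> U - {l} \<Longrightarrow> (b \<noteq> l \<longrightarrow> ?R'\<^sup>*\<^sup>* a b) \<and> (b = l \<longrightarrow> ?R'\<^sup>*\<^sup>* a p)" for a b
  proof (induction rule: rtranclp_induct)
    case base
    then have "a \<noteq> l" by blast
    then show ?case by simp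
  next
    case (step b c)
    have IH: "(b \<noteq> l \<longrightarrow> ?R'\<^sup>*\<^sup>* a b) \<and> (b = l \<longrightarrow> ?R'\<^sup>*\<^sup>* a p)" using step(3)[OF step(4)] .
    have bc: "b \<in> U" "c \<in> U" "0 < e b c" using step(2) by blast+
    show ?case
    proof (cases "c = l")
      case True
      then have bl: "b \<noteq> l" using bc lp by auto
      have "e l b > 0" using bc(3) True sym by metis
      then have "b = p" using only bc(1) by auto
      then have "?R'\<^sup>*\<^sup>* a p" using IH bl by blast
      then show ?thesis using True by blast
    next
      case False
      show ?thesis
      proof (cases "b = l")
        case True
        then have "c = p" using only bc by auto
        then have "?R'\<^sup>*\<^sup>* a c" using IH True by blast
        then show ?thesis using False by blast
      next
        case bF: False
        then have "?R'\<^sup>*\<^sup>* a b" using IH by blast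
        moreover have "?R' b c" using bc bF False by blast
        ultimately have "?R'\<^sup>*\<^sup>* a c" by (rule rtranclp.rtrancl_into_rtrancl)
        then show ?thesis using False by blast
      qed
    qed
  qed
  have "U - {l} \<noteq> {}" using p pl by auto
  moreover have "\<forall>a\<in>U-{l}. \<forall>b\<in>U-{l}. ?R'\<^sup>*\<^sup>* a b"
  proof (intro ballI)
    fix a b assume a: "a \<in> U - {l}" and b: "b \<in> U - {l}"
    then have r: "?R\<^sup>*\<^sup>* a b" using conn unfolding connected_on_def by blast
    have "b \<noteq> l" using b by blast
    then show "?R'\<^sup>*\<^sup>* a b" using key[OF r a] by blast
  qed
  ultimately show ?thesis unfolding connected_on_def by (rule conjI)
qed

lemma lap_sum:
  assumes "finite U" "u \<in> U" "\<forall>a. e a a = 0"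
  shows "(\<Sum>w\<in>U. x w * laplacian U e w u) = x u * vdeg U e u - (\<Sum>w\<in>U. x w * int (e w u))"
proof -
  have "(\<Sum>w\<in>U. x w * laplacian U e w u) = (\<Sum>w\<in>U. (if w = u then x u * vdeg U e u else 0) - x w * int (e w u))"
    by (rule sum.cong) (auto simp: laplacian_def assms(3) algebra_simps)
  also have "\<dots> = x u * vdeg U e u - (\<Sum>w\<in>U. x w * int (e w u))"
    using assms by (simp add: sum_subtractf)
  finally show ?thesis .
qed

lemma sum_single:
  assumes "finite A" "a \<in> A" "\<forall>z\<in>A. z \<noteq> a \<longrightarrow> g z = 0"
  shows "sum g A = g a"
  using sum.remove[OF assms(1,2), of g] assms(3) by (simp add: sum.neutral)

lemma tree_solve:
  "finite U \<Longrightarrow> v \<in> U \<Longrightarrow> (\<forall>a b. e a b = e b a) \<Longrightarrow> (\<forall>a. e a a = 0) \<Longrightarrow> connected_on U e \<Longrightarrow>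
   (\<Sum>u\<in>U. \<Sum>w\<in>U. e u w) = 2 * (card U - 1) \<Longrightarrow>
   \<exists>x. x v = 0 \<and> (\<forall>u\<in>U-{v}. h u + (\<Sum>w\<in>U. x w * laplacian U e w u) = 0)"
proof (induction "card U" arbitrary: U h rule: less_induct)
  case less
  note fin = less.prems(1) and v = less.prems(2) and sym = less.prems(3) and lp = less.prems(4)
    and conn = less.prems(5) and tot = less.prems(6)
  show ?case
  proof (cases "card U \<le> 1")
    case True
    then have "\<forall>a\<in>U. \<forall>b\<in>U. a = b" using card_le_Suc0_iff_eq[OF fin] by simp
    then have "U = {v}" using v by blast
    then show ?thesis by (intro exI[of _ "\<lambda>_. 0"]) auto
  next
    case False
    then have c2: "2 \<le> card U" by simp
    obtain l where l: "l \<in> U - {v}" and dl: "(\<Sum>z\<in>U. e l z) = 1"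
      using leaf_exists[OF conn v fin c2 tot] by blast
    obtain p where p: "p \<in> U" "0 < e l p"
    proof -
      have "\<not> (\<forall>z\<in>U. e l z = 0)"
      proof
        assume "\<forall>z\<in>U. e l z = 0"
        then have "(\<Sum>z\<in>U. e l z) = 0" by simp
        then show False using dl by simp
      qed
      then obtain z where "z \<in> U" "e l z \<noteq> 0" by blast
      then show ?thesis using that by simp
    qed
    have rest: "(\<Sum>z\<in>U. e l z) = e l p + (\<Sum>z\<in>U-{p}. e l z)" using sum.remove[OF fin p(1)] .
    then have elp: "e l p = 1" and rest0: "(\<Sum>z\<in>U-{p}. e l z) = 0" using dl p(2) by auto
    have only: "\<forall>z\<in>U. z \<noteq> p \<longrightarrow> e l z = 0" using rest0 fin by auto
    have pl: "p \<noteq> l" using p lp by auto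
    have es: "\<And>a b. e a b = e b a" using sym by blast
    define U' where "U' = U - {l}"
    have finU': "finite U'" using fin U'_def by simp
    have cU': "card U' = card U - 1" using l fin U'_def by simp
    have vU': "v \<in> U'" using l v U'_def by auto
    have pU': "p \<in> U'" using p pl U'_def by auto
    have connU': "connected_on U' e" unfolding U'_def
      using leaf_remove_conn[OF conn _ sym lp p only] l by auto
    have totU': "(\<Sum>u\<in>U'. \<Sum>w\<in>U'. e u w) = 2 * (card U' - 1)"
    proof -
      have lU: "l \<in> U" using l by auto
      have A: "(\<Sum>u\<in>U. \<Sum>w\<in>U. e u w) = (\<Sum>w\<in>U. e l w) + (\<Sum>u\<in>U'. \<Sum>w\<in>U. e u w)"
        unfolding U'_def using sum.remove[OF fin lU] .
      have B: "(\<Sum>u\<in>U'. \<Sum>w\<in>U. e u w) = (\<Sum>u\<in>U'. e u l + (\<Sum>w\<in>U'. e u w))"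
        unfolding U'_def by (rule sum.cong) (auto simp: sum.remove[OF fin lU])
      have C: "(\<Sum>u\<in>U'. e u l) = 1"
      proof -
        have "(\<Sum>u\<in>U'. e u l) = (\<Sum>u\<in>U'. e l u)" by (rule sum.cong) (auto simp: es[of _ l])
        also have "\<dots> = e l p" using sum_single[OF finU' pU', of "e l"] only U'_def by auto
        finally show ?thesis using elp by simp
      qed
      have "(\<Sum>u\<in>U. \<Sum>w\<in>U. e u w) = 2 + (\<Sum>u\<in>U'. \<Sum>w\<in>U'. e u w)"
        using A B C dl by (simp add: sum.distrib)
      then show ?thesis using tot cU' c2 by simp
    qed
    have lt: "card U' < card U" using cU' c2 by simp
    define h' where "h' = h(p := h p + h l)"
    obtain x' where x'v: "x' v = 0" and x'sol: "\<forall>u\<in>U'-{v}. h' u + (\<Sum>w\<in>U'. x' w * laplacian U' e w u) = 0"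
      using less.hyps[OF lt finU' vU' sym lp connU' totU', of h'] by blast
    define x where "x = x'(l := x' p - h l)"
    have xv: "x v = 0" using x'v l x_def by auto
    have lU: "l \<in> U" using l by auto
    have sumx: "(\<Sum>w\<in>U. x w * int (e w u)) = x l * int (e l u) + (\<Sum>w\<in>U'. x' w * int (e w u))" for u
    proof -
      have "(\<Sum>w\<in>U. x w * int (e w u)) = x l * int (e l u) + (\<Sum>w\<in>U'. x w * int (e w u))"
        unfolding U'_def using sum.remove[OF fin lU] .
      moreover have "(\<Sum>w\<in>U'. x w * int (e w u)) = (\<Sum>w\<in>U'. x' w * int (e w u))"
        by (rule sum.cong) (auto simp: x_def U'_def)
      ultimately show ?thesis by simp
    qed
    have vdegU: "vdeg U e u = vdeg U' e u + int (e u l)" for u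
      unfolding vdeg_def U'_def using sum.remove[OF fin lU, of "\<lambda>w. int (e u w)"] by simp
    have "\<forall>u\<in>U-{v}. h u + (\<Sum>w\<in>U. x w * laplacian U e w u) = 0"
    proof
      fix u assume u: "u \<in> U - {v}"
      show "h u + (\<Sum>w\<in>U. x w * laplacian U e w u) = 0"
      proof (cases "u = l")
        case True
        have s1: "(\<Sum>w\<in>U'. x' w * int (e w l)) = x' p"
        proof -
          have "(\<Sum>w\<in>U'. x' w * int (e w l)) = x' p * int (e p l)"
          proof (rule sum_single[OF finU' pU'], intro ballI impI)
            fix z assume "z \<in> U'" "z \<noteq> p"
            then have "e l z = 0" using only U'_def by auto
            then show "x' z * int (e z l) = 0" by (simp add: es[of z l])
          qed
          then show ?thesis using elp es[of p l] by simp
        qed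
        have "vdeg U e l = 1" using dl unfolding vdeg_def by (metis of_nat_1 of_nat_sum)
        then show ?thesis using True lap_sum[of U l e x, OF fin lU lp] sumx[of l] s1 lp
          by (simp add: x_def)
      next
        case False
        then have uU': "u \<in> U' - {v}" using u U'_def by auto
        have L': "(\<Sum>w\<in>U'. x' w * laplacian U' e w u) = x' u * vdeg U' e u - (\<Sum>w\<in>U'. x' w * int (e w u))"
          using lap_sum[of U' u e x', OF finU' _ lp] uU' by auto
        have L: "(\<Sum>w\<in>U. x w * laplacian U e w u) = x u * vdeg U e u - (\<Sum>w\<in>U. x w * int (e w u))"
          using lap_sum[of U u e x, OF fin _ lp] u by auto
        have xu: "x u = x' u" using False x_def by simp
        have E: "h u + (\<Sum>w\<in>U. x w * laplacian U e w u)
              = h u + (\<Sum>w\<in>U'. x' w * laplacian U' e w u) + x' u * int (e u l) - x l * int (e l u)"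
          using L L' xu vdegU[of u] sumx[of u] by (simp add: algebra_simps)
        show ?thesis
        proof (cases "u = p")
          case True
          have "e p l = 1" using elp es[of p l] by simp
          have "h' p + (\<Sum>w\<in>U'. x' w * laplacian U' e w p) = 0" using x'sol uU' True by blast
          then have "h p + h l + (\<Sum>w\<in>U'. x' w * laplacian U' e w p) = 0" by (simp add: h'_def)
          then show ?thesis using E True elp \<open>e p l = 1\<close> by (simp add: x_def pl)
        next
          case uF: False
          have "e l u = 0" using only u uF by auto
          moreover then have "e u l = 0" using es[of u l] by simp
          moreover have "h' u + (\<Sum>w\<in>U'. x' w * laplacian U' e w u) = 0" using x'sol uU' by blast
          ultimately show ?thesis using E uF by (simp add: h'_def)
        qed
      qed
    qed
    then show ?thesis using xv by blast
  qed
qed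



locale dec =
  fixes V V1 U :: "'a set" and e :: "'a \<Rightarrow> 'a \<Rightarrow> nat" and v :: 'a
  assumes G: "is_graph V e" and D: "decomposes V e v V1 U"
begin

lemma finV: "finite V" using G unfolding is_graph_def by blast
lemma VU: "V = V1 \<union> U" using D unfolding decomposes_def by blast
lemma V1U: "V1 \<inter> U = {v}" using D unfolding decomposes_def by blast
lemma finV1: "finite V1" using finV VU by (metis finite_Un)
lemma finU: "finite U" using finV VU by (metis finite_Un)
lemma vV1: "v \<in> V1" using V1U by blast
lemma vU: "v \<in> U" using V1U by blast
lemma loop: "e a a = 0" using G unfolding is_graph_def by blast
lemma loopA: "\<forall>a. e a a = 0" using loop by blast
lemma es: "e a b = e b a" using G unfolding is_graph_def by blast
lemma z1: "a \<in> V1 - {v} \<Longrightarrow> b \<in> U - {v} \<Longrightarrow> e a b = 0"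
  using D unfolding decomposes_def by blast
lemma z2: "a \<in> V1 - {v} \<Longrightarrow> b \<in> U - {v} \<Longrightarrow> e b a = 0"
  using z1 es by metis
lemma VmV1: "w \<in> V - V1 \<Longrightarrow> w \<in> U - {v}" using VU vV1 by blast
lemma VmU: "w \<in> V - U \<Longrightarrow> w \<in> V1 - {v}" using VU vU by blast

abbreviation "e1 \<equiv> induced e V1"

lemma loop1: "\<forall>a. e1 a a = 0" by (simp add: induced_def loop)

lemma vdeg_V1: "u \<in> V1 - {v} \<Longrightarrow> vdeg V e u = vdeg V1 e1 u"
proof -
  assume u: "u \<in> V1 - {v}"
  have "vdeg V e u = (\<Sum>w\<in>V1. int (e u w))" unfolding vdeg_def
    by (rule sum.mono_neutral_right[OF finV]) (use VU u z1 VmV1 in auto)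
  also have "\<dots> = vdeg V1 e1 u" unfolding vdeg_def
    by (rule sum.cong) (use u in \<open>auto simp: induced_def\<close>)
  finally show ?thesis .
qed

lemma vdeg_U: "u \<in> U - {v} \<Longrightarrow> vdeg V e u = vdeg U e u"
proof -
  assume u: "u \<in> U - {v}"
  show ?thesis unfolding vdeg_def
    by (rule sum.mono_neutral_right[OF finV]) (use VU u z2 VmU in auto)
qed

lemma sumU_lap: "(\<Sum>u\<in>U. laplacian V e w u) = (if w \<in> U then vdeg V e w else 0) - (\<Sum>u\<in>U. int (e w u))"
proof -
  have "(\<Sum>u\<in>U. laplacian V e w u) = (\<Sum>u\<in>U. (if u = w then vdeg V e w else 0) - int (e w u))"
    by (rule sum.cong) (auto simp: laplacian_def loop)
  also have "\<dots> = (\<Sum>u\<in>U. (if u = w then vdeg V e w else 0)) - (\<Sum>u\<in>U. int (e w u))"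
    by (simp add: sum_subtractf)
  also have "(\<Sum>u\<in>U. (if u = w then vdeg V e w else 0)) = (if w \<in> U then vdeg V e w else 0)"
    using finU by (simp add: sum.delta')
  finally show ?thesis .
qed

lemma contract_lap:
  assumes u: "u \<in> V1"
  shows "contract U v (\<lambda>u. \<Sum>w\<in>V. x w * laplacian V e w u) u = (\<Sum>w\<in>V1. x w * laplacian V1 e1 w u)"
proof (cases "u = v")
  case False
  then have u': "u \<in> V1 - {v}" using u by blast
  have uV: "u \<in> V" using u VU by blast
  have "contract U v (\<lambda>u. \<Sum>w\<in>V. x w * laplacian V e w u) u = (\<Sum>w\<in>V. x w * laplacian V e w u)"
    using False by (simp add: contract_def)
  also have "\<dots> = x u * vdeg V e u - (\<Sum>w\<in>V. x w * int (e w u))"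
    by (rule lap_sum[of V u e x, OF finV uV loopA])
  also have "(\<Sum>w\<in>V. x w * int (e w u)) = (\<Sum>w\<in>V1. x w * int (e w u))"
    by (rule sum.mono_neutral_right[OF finV]) (use VU u' z2 VmV1 in auto)
  also have "\<dots> = (\<Sum>w\<in>V1. x w * int (e1 w u))"
    by (rule sum.cong) (use u in \<open>auto simp: induced_def\<close>)
  also have "vdeg V e u = vdeg V1 e1 u" by (rule vdeg_V1[OF u'])
  also have "x u * vdeg V1 e1 u - (\<Sum>w\<in>V1. x w * int (e1 w u)) = (\<Sum>w\<in>V1. x w * laplacian V1 e1 w u)"
    by (rule lap_sum[of V1 u e1 x, OF finV1 u loop1, symmetric])
  finally show ?thesis .
next
  case True
  define S where "S w = (\<Sum>u\<in>U. laplacian V e w u)" for w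
  have "contract U v (\<lambda>u. \<Sum>w\<in>V. x w * laplacian V e w u) u = (\<Sum>u\<in>U. \<Sum>w\<in>V. x w * laplacian V e w u)"
    using True by (simp add: contract_def)
  also have "\<dots> = (\<Sum>w\<in>V. \<Sum>u\<in>U. x w * laplacian V e w u)" by (rule sum.swap)
  also have "\<dots> = (\<Sum>w\<in>V. x w * S w)" by (simp add: S_def sum_distrib_left)
  also have "\<dots> = (\<Sum>w\<in>V1. x w * S w)"
  proof (rule sum.mono_neutral_right[OF finV])
    show "V1 \<subseteq> V" using VU by blast
    show "\<forall>w\<in>V - V1. x w * S w = 0"
    proof
      fix w assume w: "w \<in> V - V1"
      then have wU: "w \<in> U - {v}" by (rule VmV1)
      have "S w = vdeg V e w - (\<Sum>u\<in>U. int (e w u))" using wU by (simp add: S_def sumU_lap)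
      also have "vdeg V e w = vdeg U e w" by (rule vdeg_U[OF wU])
      finally have "S w = 0" by (simp add: vdeg_def)
      then show "x w * S w = 0" by simp
    qed
  qed
  also have "\<dots> = (\<Sum>w\<in>V1. x w * laplacian V1 e1 w u)"
  proof (rule sum.cong)
    fix w assume w: "w \<in> V1"
    show "x w * S w = x w * laplacian V1 e1 w u"
    proof (cases "w = v")
      case False
      then have wnU: "w \<notin> U" using w V1U by blast
      have "(\<Sum>z\<in>U. int (e w z)) = int (e w v)"
        by (rule sum_single[OF finU vU]) (use w False z1 in auto)
      then have "S w = - int (e w v)" using wnU by (simp add: S_def sumU_lap)
      then show ?thesis using True False w vV1 by (simp add: laplacian_def induced_def)
    next
      case wv: True
      have un: "vdeg V e v + int (e v v) = (\<Sum>z\<in>V1. int (e v z)) + (\<Sum>z\<in>U. int (e v z))"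
        unfolding vdeg_def VU using sum.union_inter[OF finV1 finU, of "\<lambda>z. int (e v z)"] V1U by simp
      have "S v = (\<Sum>z\<in>V1. int (e v z))" using un vU loop by (simp add: S_def sumU_lap)
      also have "\<dots> = vdeg V1 e1 v" unfolding vdeg_def
        by (rule sum.cong) (use vV1 in \<open>auto simp: induced_def\<close>)
      finally show ?thesis using wv True by (simp add: laplacian_def)
    qed
  qed simp
  finally show ?thesis .
qed

lemma contract_add: "contract U v (\<lambda>u. f u + g u) u = contract U v f u + contract U v g u"
  by (simp add: contract_def sum.distrib)

lemma contract_diff: "contract U v (\<lambda>u. f u - g u) u = contract U v f u - contract U v g u"
  by (simp add: contract_def sum_subtractf)

lemma contract_cong: "u \<in> V1 \<Longrightarrow> \<forall>z\<in>V. f z = g z \<Longrightarrow> contract U v f u = contract U v g u"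
  unfolding contract_def using VU by (auto intro: sum.cong)

lemma Leff_cong: "\<forall>u\<in>W. f u = g u \<Longrightarrow> L_effective W ee f = L_effective W ee g"
  unfolding L_effective_def lin_equiv_def by auto

lemma Leff_iff:
  assumes T: "is_tree_on U e"
  shows "L_effective V e h = L_effective V1 e1 (contract U v h)"
proof
  assume "L_effective V e h"
  then obtain g x where gx: "\<forall>u\<in>V. g u = h u + (\<Sum>w\<in>V. x w * laplacian V e w u)"
    and ge: "effective V g" unfolding L_effective_def lin_equiv_def by blast
  have "\<forall>u\<in>V1. contract U v g u = contract U v h u + (\<Sum>w\<in>V1. x w * laplacian V1 e1 w u)"
  proof
    fix u assume u: "u \<in> V1"
    have "contract U v g u = contract U v (\<lambda>u. h u + (\<Sum>w\<in>V. x w * laplacian V e w u)) u"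
      by (rule contract_cong[OF u gx])
    also have "\<dots> = contract U v h u + (\<Sum>w\<in>V1. x w * laplacian V1 e1 w u)"
      by (simp add: contract_add contract_lap[OF u])
    finally show "contract U v g u = contract U v h u + (\<Sum>w\<in>V1. x w * laplacian V1 e1 w u)" .
  qed
  then have "lin_equiv V1 e1 (contract U v h) (contract U v g)" unfolding lin_equiv_def by blast
  moreover have "effective V1 (contract U v g)"
    unfolding effective_def
  proof
    fix u assume u: "u \<in> V1"
    show "0 \<le> contract U v g u"
    proof (cases "u = v")
      case True
      have "\<forall>z\<in>U. 0 \<le> g z" using ge VU unfolding effective_def by blast
      then show ?thesis using True by (simp add: contract_def sum_nonneg)
    next
      case False
      then show ?thesis using ge u VU unfolding effective_def contract_def by auto
    qed
  qed
  ultimately show "L_effective V1 e1 (contract U v h)" unfolding L_effective_def by blast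
next
  assume "L_effective V1 e1 (contract U v h)"
  then obtain g1 y where gy: "\<forall>u\<in>V1. g1 u = contract U v h u + (\<Sum>w\<in>V1. y w * laplacian V1 e1 w u)"
    and ge: "effective V1 g1" unfolding L_effective_def lin_equiv_def by blast
  define f1 where "f1 = (\<lambda>u. h u + (\<Sum>w\<in>V. y w * laplacian V e w u))"
  have cf1: "contract U v f1 u = g1 u" if u: "u \<in> V1" for u
    using gy u by (simp add: f1_def contract_add contract_lap[OF u])
  have tr: "connected_on U e" "(\<Sum>u\<in>U. \<Sum>w\<in>U. e u w) = 2 * (card U - 1)"
    using T unfolding is_tree_on_def by blast+
  have symA: "\<forall>a b. e a b = e b a" using es by blast
  obtain z where zv: "z v = 0" and zs: "\<forall>u\<in>U-{v}. f1 u + (\<Sum>w\<in>U. z w * laplacian U e w u) = 0"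
    using tree_solve[OF finU vU symA loopA tr] by blast
  define x2 where "x2 w = (if w \<in> U then z w else 0)" for w
  define f2 where "f2 = (\<lambda>u. f1 u + (\<Sum>w\<in>V. x2 w * laplacian V e w u))"
  have f2U: "f2 u = 0" if u: "u \<in> U - {v}" for u
  proof -
    have uV: "u \<in> V" "u \<in> U" using u VU by blast+
    have "(\<Sum>w\<in>V. x2 w * laplacian V e w u) = x2 u * vdeg V e u - (\<Sum>w\<in>V. x2 w * int (e w u))"
      by (rule lap_sum[of V u e x2, OF finV uV(1) loopA])
    also have "(\<Sum>w\<in>V. x2 w * int (e w u)) = (\<Sum>w\<in>U. x2 w * int (e w u))"
      by (rule sum.mono_neutral_right[OF finV]) (use VU in \<open>auto simp: x2_def\<close>)
    also have "\<dots> = (\<Sum>w\<in>U. z w * int (e w u))"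
      by (rule sum.cong) (auto simp: x2_def)
    also have "vdeg V e u = vdeg U e u" by (rule vdeg_U[OF u])
    also have "x2 u * vdeg U e u - (\<Sum>w\<in>U. z w * int (e w u)) = (\<Sum>w\<in>U. z w * laplacian U e w u)"
      using lap_sum[of U u e z, OF finU uV(2) loopA] uV by (simp add: x2_def)
    finally show ?thesis using zs u by (simp add: f2_def)
  qed
  have x2V1: "x2 w = 0" if "w \<in> V1" for w using that V1U zv by (auto simp: x2_def)
  have cf2: "contract U v f2 u = g1 u" if u: "u \<in> V1" for u
  proof -
    have "contract U v f2 u = contract U v f1 u + (\<Sum>w\<in>V1. x2 w * laplacian V1 e1 w u)"
      unfolding f2_def by (simp add: contract_add contract_lap[OF u])
    also have "(\<Sum>w\<in>V1. x2 w * laplacian V1 e1 w u) = 0" by (simp add: x2V1)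
    finally show ?thesis using cf1[OF u] by simp
  qed
  have "lin_equiv V e h f2"
    unfolding lin_equiv_def
  proof (intro exI[of _ "\<lambda>w. y w + x2 w"] ballI)
    fix u assume "u \<in> V"
    show "f2 u = h u + (\<Sum>w\<in>V. (y w + x2 w) * laplacian V e w u)"
      by (simp add: f2_def f1_def distrib_right sum.distrib)
  qed
  moreover have "effective V f2"
    unfolding effective_def
  proof
    fix u assume u: "u \<in> V"
    show "0 \<le> f2 u"
    proof (cases "u \<in> U - {v}")
      case True then show ?thesis using f2U by simp
    next
      case False
      then have u1: "u \<in> V1" using u VU vV1 by blast
      show ?thesis
      proof (cases "u = v")
        case True
        have "contract U v f2 v = f2 v + (\<Sum>w\<in>U-{v}. f2 w)"
          using sum.remove[OF finU vU, of f2] by (simp add: contract_def)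
        also have "(\<Sum>w\<in>U-{v}. f2 w) = 0" using f2U by simp
        finally have "f2 v = g1 v" using cf2[OF vV1] by simp
        then show ?thesis using ge vV1 True unfolding effective_def by simp
      next
        case False
        then have "f2 u = g1 u" using cf2[OF u1] by (simp add: contract_def)
        then show ?thesis using ge u1 unfolding effective_def by simp
      qed
    qed
  qed
  ultimately show "L_effective V e h" unfolding L_effective_def by blast
qed

lemma pred_iff:
  assumes T: "is_tree_on U e"
  shows "(\<forall>D. effective V D \<and> div_degree V D = int r \<longrightarrow> L_effective V e (\<lambda>u. f u - D u))
     = (\<forall>D. effective V1 D \<and> div_degree V1 D = int r \<longrightarrow> L_effective V1 e1 (\<lambda>u. contract U v f u - D u))"
proof
  assume H: "\<forall>D. effective V D \<and> div_degree V D = int r \<longrightarrow> L_effective V e (\<lambda>u. f u - D u)"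
  show "\<forall>D. effective V1 D \<and> div_degree V1 D = int r \<longrightarrow> L_effective V1 e1 (\<lambda>u. contract U v f u - D u)"
  proof (intro allI impI)
    fix D' assume D': "effective V1 D' \<and> div_degree V1 D' = int r"
    define D where "D u = (if u \<in> V1 then D' u else 0)" for u
    have "effective V D" using D' unfolding effective_def D_def by auto
    moreover have "div_degree V D = int r"
    proof -
      have "div_degree V D = (\<Sum>u\<in>V1. D u)" unfolding div_degree_def
        by (rule sum.mono_neutral_right[OF finV]) (use VU in \<open>auto simp: D_def\<close>)
      also have "\<dots> = div_degree V1 D'" unfolding div_degree_def by (rule sum.cong) (auto simp: D_def)
      finally show ?thesis using D' by simp
    qed
    ultimately have "L_effective V e (\<lambda>u. f u - D u)" using H by blast
    then have L: "L_effective V1 e1 (contract U v (\<lambda>u. f u - D u))" using Leff_iff[OF T] by blast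
    have cD: "contract U v D u = D' u" if u: "u \<in> V1" for u
    proof (cases "u = v")
      case True
      have "(\<Sum>w\<in>U. D w) = D v" by (rule sum_single[OF finU vU]) (use V1U in \<open>auto simp: D_def\<close>)
      then show ?thesis using True vV1 by (simp add: contract_def D_def)
    next
      case False then show ?thesis using u by (simp add: contract_def D_def)
    qed
    have "\<forall>u\<in>V1. contract U v (\<lambda>u. f u - D u) u = contract U v f u - D' u"
      using cD by (simp add: contract_diff)
    then show "L_effective V1 e1 (\<lambda>u. contract U v f u - D' u)" using L Leff_cong[of V1 "contract U v (\<lambda>u. f u - D u)" "\<lambda>u. contract U v f u - D' u" e1] by simp
  qed
next
  assume H: "\<forall>D. effective V1 D \<and> div_degree V1 D = int r \<longrightarrow> L_effective V1 e1 (\<lambda>u. contract U v f u - D u)"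
  show "\<forall>D. effective V D \<and> div_degree V D = int r \<longrightarrow> L_effective V e (\<lambda>u. f u - D u)"
  proof (intro allI impI)
    fix D assume D: "effective V D \<and> div_degree V D = int r"
    have "effective V1 (contract U v D)"
      unfolding effective_def
    proof
      fix u assume u: "u \<in> V1"
      show "0 \<le> contract U v D u"
      proof (cases "u = v")
        case True
        have "\<forall>z\<in>U. 0 \<le> D z" using D VU unfolding effective_def by blast
        then show ?thesis using True by (simp add: contract_def sum_nonneg)
      next
        case False
        then show ?thesis using D u VU unfolding effective_def contract_def by auto
      qed
    qed
    moreover have "div_degree V1 (contract U v D) = int r"
    proof -
      have "div_degree V1 (contract U v D) = contract U v D v + (\<Sum>u\<in>V1-{v}. contract U v D u)"
        unfolding div_degree_def by (rule sum.remove[OF finV1 vV1])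
      also have "(\<Sum>u\<in>V1-{v}. contract U v D u) = (\<Sum>u\<in>V1-{v}. D u)"
        by (rule sum.cong) (auto simp: contract_def)
      also have "contract U v D v = (\<Sum>u\<in>U. D u)" by (simp add: contract_def)
      also have "(\<Sum>u\<in>U. D u) + (\<Sum>u\<in>V1-{v}. D u) = (\<Sum>u\<in>V. D u)"
      proof -
        have "V = U \<union> (V1 - {v})" using VU vU by blast
        moreover have "U \<inter> (V1 - {v}) = {}" using V1U by blast
        ultimately show ?thesis using sum.union_disjoint[OF finU, of "V1 - {v}" D] finV1 by simp
      qed
      finally show ?thesis using D unfolding div_degree_def by simp
    qed
    ultimately have L: "L_effective V1 e1 (\<lambda>u. contract U v f u - contract U v D u)" using H by blast
    have "\<forall>u\<in>V1. (\<lambda>u. contract U v f u - contract U v D u) u = contract U v (\<lambda>u. f u - D u) u"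
      by (simp add: contract_diff)
    then have "L_effective V1 e1 (contract U v (\<lambda>u. f u - D u))" using L Leff_cong[of V1 "\<lambda>u. contract U v f u - contract U v D u" "contract U v (\<lambda>u. f u - D u)" e1] by simp
    then show "L_effective V e (\<lambda>u. f u - D u)" using Leff_iff[OF T] by blast
  qed
qed

lemma rank_eq:
  assumes T: "is_tree_on U e"
  shows "div_rank V e f = div_rank V1 e1 (contract U v f)"
proof -
  have P: "(\<lambda>r::nat. \<forall>D. effective V D \<and> div_degree V D = int r \<longrightarrow> L_effective V e (\<lambda>u. f u - D u))
     = (\<lambda>r. \<forall>D. effective V1 D \<and> div_degree V1 D = int r \<longrightarrow> L_effective V1 e1 (\<lambda>u. contract U v f u - D u))"
    by (rule ext) (rule pred_iff[OF T])
  show ?thesis unfolding div_rank_def P Leff_iff[OF T, of f] ..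
qed

end


theorem mainTheorem3:
  fixes V V1 U :: "'a set" and e :: "'a \<Rightarrow> 'a \<Rightarrow> nat" and v :: 'a and f :: "'a \<Rightarrow> int"
  assumes "is_graph V e" and "connected_on V e"
    and "cut_vertex V e v" and "decomposes V e v V1 U"
    and "is_tree_on U e"
  shows "div_rank V e f = div_rank V1 (induced e V1) (contract U v f)"
proof -
  interpret dec V V1 U e v using assms(1,4) by unfold_locales
  show ?thesis by (rule rank_eq[OF assms(5)])
qed

end
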